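(* Let $K$ be an algebraically closed field of characteristic $2$ and let $X=\{a_1\sigma_1^4+a_2\sigma_1^2\sigma_2+a_3\sigma_1\sigma_3+a_4\sigma_4+\beta\sigma_2^2=0\}\subset\mathbb{P}^3_K$ be a normal symmetric quartic. Then no singular point of $X$ has four pairwise distinct coordinates. Moreover, up to permutation of coordinates: - $(0,0,1,1)\in\mathrm{Sing}(X)$ iff $\beta=0$; - $(0,0,0,1)\in\mathrm{Sing}(X)$ iff $a_1=a_2=0$; - for $b\neq1$: $(1,1,1,b)\in\mathrm{Sing}(X)$ iff $a_4=a_2(1+b)^2$ and $\beta=a_1(1+b)^2+a_2+a_3$; - $(1,1,1,1)\in\mathrm{Sing}(X)$ iff $a_4=0$; - for $b\neq0,1$: $(0,0,1,b)\in\mathrm{Sing}(X)$ iff $a_2=a_3=0$ and $a_1(1+b)^4+\beta b^2=0$; - for $z\neq0,1$: $(0,1,1,z)\in\mathrm{Sing}(X)$ iff $a_3=za_2$, $a_4=z^2a_2$ and $\beta=a_1z^4+a_2z^2(1+z)$; - for $b,c\notin\{0,1\}$ with $b\neq c$, setting $z=b+c$: $(1,1,b,c)\in\mathrm{Sing}(X)$ iff $a_3=za_2$, $a_4=z^2a_2$ and $\beta(1+bc)^2+a_1z^4+a_2z^2(1+z)=0$. *)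

theory Defs
  imports "HOL-Computational_Algebra.Polynomial"
begin

definition alg_closed :: "'a::field itself \<Rightarrow> bool" where
  "alg_closed _ \<longleftrightarrow> (\<forall>p::'a poly. 0 < degree p \<longrightarrow> (\<exists>x. poly p x = 0))"

definition esym4 :: "nat \<Rightarrow> (nat \<Rightarrow> 'b::comm_ring_1) \<Rightarrow> 'b" where
  "esym4 k y = (\<Sum>S\<in>{S. S \<subseteq> {0..<4} \<and> card S = k}. \<Prod>j\<in>S. y j)"

definition symq :: "('a \<Rightarrow> 'b::comm_ring_1) \<Rightarrow> 'a \<Rightarrow> 'a \<Rightarrow> 'a \<Rightarrow> 'a \<Rightarrow> 'a \<Rightarrow> (nat \<Rightarrow> 'b) \<Rightarrow> 'b" where
  "symq c a1 a2 a3 a4 \<beta> y =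
     c a1 * esym4 1 y ^ 4 + c a2 * esym4 1 y ^ 2 * esym4 2 y + c a3 * esym4 1 y * esym4 3 y
     + c a4 * esym4 4 y + c \<beta> * esym4 2 y ^ 2"

definition F :: "'a::field \<Rightarrow> 'a \<Rightarrow> 'a \<Rightarrow> 'a \<Rightarrow> 'a \<Rightarrow> (nat \<Rightarrow> 'a) \<Rightarrow> 'a" where
  "F a1 a2 a3 a4 \<beta> x = symq id a1 a2 a3 a4 \<beta> x"

text \<open>Partial derivative dF/dx_i at x: view F as a univariate polynomial in the i-th variable
  (others fixed to the coordinates of x), take the formal derivative, evaluate at x i.\<close>
definition dF :: "'a::field \<Rightarrow> 'a \<Rightarrow> 'a \<Rightarrow> 'a \<Rightarrow> 'a \<Rightarrow> nat \<Rightarrow> (nat \<Rightarrow> 'a) \<Rightarrow> 'a" where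
  "dF a1 a2 a3 a4 \<beta> i x =
     poly (pderiv (symq (\<lambda>t. [:t:]) a1 a2 a3 a4 \<beta> (\<lambda>j. if j = i then [:0, 1:] else [:x j:]))) (x i)"

definition sing_pt :: "'a::field \<Rightarrow> 'a \<Rightarrow> 'a \<Rightarrow> 'a \<Rightarrow> 'a \<Rightarrow> (nat \<Rightarrow> 'a) \<Rightarrow> bool" where
  "sing_pt a1 a2 a3 a4 \<beta> x \<longleftrightarrow> (\<exists>i<4. x i \<noteq> 0) \<and> F a1 a2 a3 a4 \<beta> x = 0 \<and>
     (\<forall>i<4. dF a1 a2 a3 a4 \<beta> i x = 0)"

text \<open>Normality of the quartic surface X = {F = 0} in P^3 (hypersurface: normal iff
  F is nonzero with only finitely many singular points, by Serre's criterion):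
  the singular locus consists of finitely many projective points.\<close>
definition normal_quartic :: "'a::field \<Rightarrow> 'a \<Rightarrow> 'a \<Rightarrow> 'a \<Rightarrow> 'a \<Rightarrow> bool" where
  "normal_quartic a1 a2 a3 a4 \<beta> \<longleftrightarrow>
     (\<exists>x. (\<exists>i<4. x i \<noteq> 0) \<and> F a1 a2 a3 a4 \<beta> x \<noteq> 0) \<and>
     (\<exists>P. finite P \<and> (\<forall>x. sing_pt a1 a2 a3 a4 \<beta> x \<longrightarrow>
        (\<exists>p\<in>P. \<exists>t::'a. \<forall>i<4. x i = t * p i)))"

definition pt :: "'a \<Rightarrow> 'a \<Rightarrow> 'a \<Rightarrow> 'a \<Rightarrow> nat \<Rightarrow> 'a" where
  "pt x0 x1 x2 x3 = (\<lambda>i. if i = 0 then x0 else if i = 1 then x1 else if i = 2 then x2 else x3)"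

end

theory Submission imports Defs begin
lemma filt_ins: "{x \<in> insert a B. P x} = (if P a then insert a {x\<in>B. P x} else {x\<in>B. P x})"
  by auto
lemma filt_empty: "{x \<in> {}. P x} = {}" by auto
lemma PowEq: "Pow {0,1,2,3::nat} = {{0,1,2,3},{0,1,2},{0,1,3},{0,1},{0,2,3},{0,2},{0,3},{0},{1,2,3},{1,2},{1,3},{1},{2,3},{2},{3},{}}"
  by (simp add: Pow_insert insert_commute)
lemma sets4: "{S. S \<subseteq> {0..<4::nat} \<and> card S = k} = {S \<in> Pow {0,1,2,3}. card S = k}"
  by (auto simp: atLeast0LessThan lessThan_def)
lemma e1: "esym4 1 y = y 0 + y 1 + y 2 + y 3"
  unfolding esym4_def sets4 PowEq filt_ins filt_empty by (simp add: algebra_simps doubleton_eq_iff insert_eq_iff insert_commute)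
lemma e2: "esym4 2 y = y 0 * y 1 + y 0 * y 2 + y 0 * y 3 + y 1 * y 2 + y 1 * y 3 + y 2 * y 3"
  unfolding esym4_def sets4 PowEq filt_ins filt_empty by (simp add: algebra_simps doubleton_eq_iff insert_eq_iff insert_commute)
lemma S3: "{S. S \<subseteq> {0..<4::nat} \<and> card S = 3} = {{0,1,2},{0,1,3},{0,2,3},{1,2,3}}"
  unfolding sets4 PowEq filt_ins filt_empty by simp
lemma ne1: "{0,1,2::nat} \<notin> {{0,1,3},{0,2,3},{1,2,3}}" 
  by (simp add: set_eq_iff) presburger
lemma ne2: "{0,1,3::nat} \<notin> {{0,2,3},{1,2,3}}" 
  by (simp add: set_eq_iff) presburger
lemma ne3: "{0,2,3::nat} \<notin> {{1,2,3}}" 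
  by (simp add: set_eq_iff) presburger
lemma e3: "esym4 3 y = y 0 * y 1 * y 2 + y 0 * y 1 * y 3 + y 0 * y 2 * y 3 + y 1 * y 2 * y 3"
  unfolding esym4_def S3
  apply (subst sum.insert, simp, rule ne1)
  apply (subst sum.insert, simp, rule ne2)
  apply (subst sum.insert, simp, rule ne3)
  by (simp add: algebra_simps)
lemma e4: "esym4 4 y = y 0 * y 1 * y 2 * y 3"
  unfolding esym4_def sets4 PowEq filt_ins filt_empty by (simp add: algebra_simps doubleton_eq_iff insert_eq_iff insert_commute)
lemma c2_Bit0: "(2::'a::comm_ring_1) = 0 \<Longrightarrow> (numeral (Num.Bit0 n)::'a) = 0"
  by (metis mult_2 mult_zero_left numeral_Bit0)
lemma c2_Bit1: "(2::'a::comm_ring_1) = 0 \<Longrightarrow> (numeral (Num.Bit1 n)::'a) = 1"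
  by (metis add.commute add_0 c2_Bit0 numeral_Bit1 numeral_Bit0)
lemma c2_neg: "(2::'a::comm_ring_1) = 0 \<Longrightarrow> -(x::'a) = x"
  by (metis add_eq_0_iff mult_2_right mult_zero_right)
lemma c2_diff: "(2::'a::comm_ring_1) = 0 \<Longrightarrow> (x::'a) - y = x + y"
  by (metis c2_neg diff_conv_add_uminus)

definition "PP a2 a3 a4 x t = a4 * t^3 + (a3+a4)*esym4 1 x*t^2 + ((a2+a3)*esym4 1 x^2 + a4*esym4 2 x)*t
   + a2*esym4 1 x^3 + a3*esym4 3 x + a3*esym4 1 x*esym4 2 x + a4*esym4 3 x"
lemma pd_add: "poly (pderiv (p+q)) a = poly (pderiv p) a + poly (pderiv q) a" by (simp add: pderiv_add)
lemma pd_mult: "poly (pderiv (p*q)) a = poly p a * poly (pderiv q) a + poly q a * poly (pderiv p) a" by (simp add: pderiv_mult)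
lemma pd_pow: "poly (pderiv (p^n)) a = of_nat n * poly p a^(n-1) * poly (pderiv p) a" by (simp add: pderiv_power mult.assoc)
lemma pd_const: "poly (pderiv [:c:]) a = 0" by simp
lemma pd_X: "poly (pderiv [:0,1:]) a = 1" by (simp add: pderiv_pCons)
lemma pc: "poly [:c:] a = c" by simp
lemma dF_gen: fixes x :: "nat \<Rightarrow> 'a::field" assumes t: "(2::'a) = 0" and i: "i < 4"
  shows "dF a1 a2 a3 a4 \<beta> i x = PP a2 a3 a4 x (x i)"
proof -
  define Y where "Y = (\<lambda>j. if j = i then [:0, 1:] else [:x j:])"
  have Yv: "poly (Y j) (x i) = x j" for j by (simp add: Y_def)
  have Yd: "poly (pderiv (Y j)) (x i) = (if j = i then 1 else 0)" for j by (simp add: Y_def pderiv_pCons)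
  have "dF a1 a2 a3 a4 \<beta> i x = poly (pderiv (symq (\<lambda>t. [:t:]) a1 a2 a3 a4 \<beta> Y)) (x i)"
    unfolding dF_def Y_def ..
  also have "\<dots> = PP a2 a3 a4 x (x i)"
    unfolding symq_def e1 e2 e3 e4
    apply (simp only: pd_add pd_mult pd_pow pd_const poly_add poly_mult poly_power pc Yv Yd)
    using i t unfolding PP_def e1 e2 e3 e4
    apply (simp add: less_Suc_eq numeral_eq_Suc)
    apply (elim disjE)
    by (simp_all add: algebra_simps c2_Bit0[OF t] c2_Bit1[OF t] c2_diff[OF t] c2_neg[OF t])
  finally show ?thesis .
qed


lemma c2_eq: "(2::'a::comm_ring_1) = 0 \<Longrightarrow> ((x::'a) + y = 0) = (x = y)"
  by (metis add_diff_cancel_right' c2_diff diff_self)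

lemma two_of_char: "CHAR('a::field) = 2 \<Longrightarrow> (2::'a) = 0"
  by (metis of_nat_CHAR of_nat_numeral)

lemma all4: "(\<forall>i<(4::nat). P i) \<longleftrightarrow> P 0 \<and> P 1 \<and> P 2 \<and> P 3"
  by (auto simp: numeral_eq_Suc less_Suc_eq)
lemma ex4: "(\<exists>i<(4::nat). P i) \<longleftrightarrow> P 0 \<or> P 1 \<or> P 2 \<or> P 3"
  by (auto simp: numeral_eq_Suc less_Suc_eq)

lemma sing_iff:
  fixes x :: "nat \<Rightarrow> 'a::field" and a1 a2 a3 a4 \<beta> :: 'a
  assumes t: "(2::'a) = 0"
  shows "sing_pt a1 a2 a3 a4 \<beta> x \<longleftrightarrow> (x 0 \<noteq> 0 \<or> x 1 \<noteq> 0 \<or> x 2 \<noteq> 0 \<or> x 3 \<noteq> 0) \<and>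
     symq id a1 a2 a3 a4 \<beta> x = 0 \<and> PP a2 a3 a4 x (x 0) = 0 \<and> PP a2 a3 a4 x (x 1) = 0
     \<and> PP a2 a3 a4 x (x 2) = 0 \<and> PP a2 a3 a4 x (x 3) = 0"
proof -
  have d0: "dF a1 a2 a3 a4 \<beta> 0 x = PP a2 a3 a4 x (x 0)" by (simp add: dF_gen[OF t])
  have d1: "dF a1 a2 a3 a4 \<beta> 1 x = PP a2 a3 a4 x (x 1)" by (simp add: dF_gen[OF t])
  have d2: "dF a1 a2 a3 a4 \<beta> 2 x = PP a2 a3 a4 x (x 2)" by (simp add: dF_gen[OF t])
  have d3: "dF a1 a2 a3 a4 \<beta> 3 x = PP a2 a3 a4 x (x 3)" by (simp add: dF_gen[OF t])
  show ?thesis unfolding sing_pt_def F_def all4 ex4 d0 d1 d2 d3 by simp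
qed

lemma cubic_zero:
  fixes c0 c1 c2 c3 :: "'a::field"
  assumes "\<And>r. r \<in> {r0,r1,r2,r3} \<Longrightarrow> c0 + c1*r + c2*r^2 + c3*r^3 = 0"
    and "distinct [r0,r1,r2,r3]"
  shows "c0 = 0 \<and> c1 = 0 \<and> c2 = 0 \<and> c3 = 0"
proof -
  define p where "p = [:c0,c1,c2,c3:]"
  have ev: "poly p r = c0 + c1*r + c2*r^2 + c3*r^3" for r
    by (simp add: p_def algebra_simps power2_eq_square power3_eq_cube)
  have "p = 0"
  proof (rule ccontr)
    assume "p \<noteq> 0"
    then have "card {x. poly p x = 0} \<le> degree p" by (rule card_poly_roots_bound)
    also have "degree p \<le> 3" unfolding p_def by (simp add: degree_pCons_le)
    finally have a: "card {x. poly p x = 0} \<le> 3" .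
    have "{r0,r1,r2,r3} \<subseteq> {x. poly p x = 0}" using assms(1) ev by auto
    moreover have "finite {x. poly p x = 0}" using \<open>p \<noteq> 0\<close> poly_roots_finite by blast
    ultimately have "card {r0,r1,r2,r3} \<le> card {x. poly p x = 0}" by (rule card_mono[rotated])
    moreover have "card {r0,r1,r2,r3} = 4" using assms(2) by simp
    ultimately show False using a by simp
  qed
  then show ?thesis by (simp add: p_def)
qed

lemma quad_zero:
  fixes c0 c1 c2 :: "'a::field"
  assumes "\<And>r. r \<in> {r0,r1,r2} \<Longrightarrow> c0 + c1*r + c2*r^2 = 0"
    and "distinct [r0,r1,r2]"
  shows "c0 = 0 \<and> c1 = 0 \<and> c2 = 0"
proof -
  define p where "p = [:c0,c1,c2:]"
  have ev: "poly p r = c0 + c1*r + c2*r^2" for r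
    by (simp add: p_def algebra_simps power2_eq_square)
  have "p = 0"
  proof (rule ccontr)
    assume "p \<noteq> 0"
    then have "card {x. poly p x = 0} \<le> degree p" by (rule card_poly_roots_bound)
    also have "degree p \<le> 2" unfolding p_def by (simp add: degree_pCons_le)
    finally have a: "card {x. poly p x = 0} \<le> 2" .
    have "{r0,r1,r2} \<subseteq> {x. poly p x = 0}" using assms(1) ev by auto
    moreover have "finite {x. poly p x = 0}" using \<open>p \<noteq> 0\<close> poly_roots_finite by blast
    ultimately have "card {r0,r1,r2} \<le> card {x. poly p x = 0}" by (rule card_mono[rotated])
    moreover have "card {r0,r1,r2} = 3" using assms(2) by simp
    ultimately show False using a by simp
  qed
  then show ?thesis by (simp add: p_def)
qed

lemma alg_closed_infinite:
  assumes "alg_closed TYPE('a::field)"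
  shows "infinite (UNIV::'a set)"
proof
  assume fin: "finite (UNIV::'a set)"
  define q where "q = (\<Prod>a\<in>(UNIV::'a set). [:-a,1:])"
  have dq: "degree q = card (UNIV::'a set)"
    unfolding q_def by (subst degree_prod_eq_sum_degree) auto
  have "card (UNIV::'a set) > 0" using fin by (simp add: finite_UNIV_card_ge_0)
  then have "degree (q + 1) > 0" using dq by (subst degree_add_eq_left) auto
  then obtain x where "poly (q + 1) x = 0" using assms unfolding alg_closed_def by blast
  moreover have "poly q x = 0" unfolding q_def poly_prod
    by (rule prod_zero) (use fin in auto)
  ultimately show False by simp
qed


lemma e1': "esym4 (Suc 0) y = y 0 + y 1 + y 2 + y 3" using e1 by simp
lemma pt_simps[simp]: "pt a b c d 0 = a" "pt a b c d 1 = b" "pt a b c d 2 = c" "pt a b c d 3 = d" "pt a b c d (Suc 0) = b"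
  by (simp_all add: pt_def)

lemma L0011: fixes a1 a2 a3 a4 \<beta> :: "'a::field" assumes t: "(2::'a) = 0"
  shows "sing_pt a1 a2 a3 a4 \<beta> (pt 0 0 1 1) \<longleftrightarrow> \<beta> = 0"
proof -
  have S: "esym4 1 (pt 0 0 1 1) = (0::'a)" "esym4 2 (pt 0 0 1 1) = (1::'a)" "esym4 3 (pt 0 0 1 1) = (0::'a)" "esym4 4 (pt 0 0 1 1) = (0::'a)"
    by (simp_all add: e1 e1' e2 e3 e4 t)
  show ?thesis unfolding sing_iff[OF t] symq_def PP_def S 
    by (simp add: c2_Bit0[OF t] c2_Bit1[OF t] c2_diff[OF t] c2_neg[OF t] algebra_simps)
qed

lemma L0001: fixes a1 a2 a3 a4 \<beta> :: "'a::field" assumes t: "(2::'a) = 0"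
  shows "sing_pt a1 a2 a3 a4 \<beta> (pt 0 0 0 1) \<longleftrightarrow> a1 = 0 \<and> a2 = 0"
proof -
  have S: "esym4 1 (pt 0 0 0 1) = (1::'a)" "esym4 2 (pt 0 0 0 1) = (0::'a)" "esym4 3 (pt 0 0 0 1) = (0::'a)" "esym4 4 (pt 0 0 0 1) = (0::'a)"
    by (simp_all add: e1 e1' e2 e3 e4 t)
  show ?thesis unfolding sing_iff[OF t] symq_def PP_def S 
    by (simp add: c2_Bit0[OF t] c2_Bit1[OF t] c2_diff[OF t] c2_neg[OF t] algebra_simps)
qed

lemma L1111: fixes a1 a2 a3 a4 \<beta> :: "'a::field" assumes t: "(2::'a) = 0"
  shows "sing_pt a1 a2 a3 a4 \<beta> (pt 1 1 1 1) \<longleftrightarrow> a4 = 0"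
proof -
  have S: "esym4 1 (pt 1 1 1 1) = (0::'a)" "esym4 2 (pt 1 1 1 1) = (0::'a)" "esym4 3 (pt 1 1 1 1) = (0::'a)" "esym4 4 (pt 1 1 1 1) = (1::'a)"
    by (simp_all add: e1 e1' e2 e3 e4 c2_Bit0[OF t] c2_Bit1[OF t])
  show ?thesis unfolding sing_iff[OF t] symq_def PP_def S 
    by (simp add: c2_Bit0[OF t] c2_Bit1[OF t] c2_diff[OF t] c2_neg[OF t] algebra_simps)
qed


lemma c2_self: "(2::'a::comm_ring_1) = 0 \<Longrightarrow> (x::'a) + x = 0"
  by (metis c2_eq)

lemma L111b: fixes a1 a2 a3 a4 \<beta> b :: "'a::field" assumes t: "(2::'a) = 0" and b: "b \<noteq> 1"
  shows "sing_pt a1 a2 a3 a4 \<beta> (pt 1 1 1 b) \<longleftrightarrow> a4 = a2 * (1 + b)^2 \<and> \<beta> = a1 * (1 + b)^2 + a2 + a3"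
proof -
  note c2s = c2_Bit0[OF t] c2_Bit1[OF t] c2_diff[OF t] c2_neg[OF t]
  have S: "esym4 1 (pt 1 1 1 b) = 1 + b" "esym4 2 (pt 1 1 1 b) = 1 + b" "esym4 3 (pt 1 1 1 b) = 1 + b" "esym4 4 (pt 1 1 1 b) = b"
    by (simp_all add: e1 e1' e2 e3 e4 c2s algebra_simps)
  have F: "symq id a1 a2 a3 a4 \<beta> (pt 1 1 1 b) = (1+b)^2*(a1*(1+b)^2+a2+a3+\<beta>) + b*(a4+a2*(1+b)^2)"
    unfolding symq_def S by (simp add: c2s algebra_simps power2_eq_square power4_eq_xxxx power3_eq_cube)
  have P1: "PP a2 a3 a4 (pt 1 1 1 b) 1 = b*(a4+a2*(1+b)^2)"
    unfolding PP_def S by (simp add: c2s algebra_simps power2_eq_square power3_eq_cube)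
  have Pb: "PP a2 a3 a4 (pt 1 1 1 b) b = a4+a2*(1+b)^2"
    unfolding PP_def S by (simp add: c2s algebra_simps power2_eq_square power3_eq_cube)
  have nz: "1 + b \<noteq> 0" using b c2_eq[OF t, of 1 b] by auto
  show ?thesis
  proof
    assume "sing_pt a1 a2 a3 a4 \<beta> (pt 1 1 1 b)"
    then have h: "symq id a1 a2 a3 a4 \<beta> (pt 1 1 1 b) = 0" "PP a2 a3 a4 (pt 1 1 1 b) b = 0"
      unfolding sing_iff[OF t] by auto
    then have h4: "a4 = a2*(1+b)^2" using Pb c2_eq[OF t] by simp
    then have "(1+b)^2*(a1*(1+b)^2+a2+a3+\<beta>) = 0" using F h t c2s by simp
    then have "a1*(1+b)^2+a2+a3+\<beta> = 0" using nz by simp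
    then have "\<beta> = a1*(1+b)^2+a2+a3" using c2_eq[OF t] by metis
    with h4 show "a4 = a2 * (1 + b)^2 \<and> \<beta> = a1 * (1 + b)^2 + a2 + a3" by simp
  next
    assume h: "a4 = a2 * (1 + b)^2 \<and> \<beta> = a1 * (1 + b)^2 + a2 + a3"
    then have "a4+a2*(1+b)^2 = 0" "a1*(1+b)^2+a2+a3+\<beta> = 0" using t c2s by simp_all
    then show "sing_pt a1 a2 a3 a4 \<beta> (pt 1 1 1 b)"
      unfolding sing_iff[OF t] pt_simps F P1 Pb by simp
  qed
qed

lemma L001b: fixes a1 a2 a3 a4 \<beta> b :: "'a::field" assumes t: "(2::'a) = 0" and b: "b \<noteq> 0" "b \<noteq> 1"
  shows "sing_pt a1 a2 a3 a4 \<beta> (pt 0 0 1 b) \<longleftrightarrow> a2 = 0 \<and> a3 = 0 \<and> a1 * (1 + b)^4 + \<beta> * b^2 = 0"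
proof -
  note c2s = c2_Bit0[OF t] c2_Bit1[OF t] c2_diff[OF t] c2_neg[OF t]
  have S: "esym4 1 (pt 0 0 1 b) = 1 + b" "esym4 2 (pt 0 0 1 b) = b" "esym4 3 (pt 0 0 1 b) = 0" "esym4 4 (pt 0 0 1 b) = 0"
    by (simp_all add: e1 e1' e2 e3 e4 c2s algebra_simps)
  have F: "symq id a1 a2 a3 a4 \<beta> (pt 0 0 1 b) = a1 * (1 + b)^4 + a2*(1+b)^2*b + \<beta> * b^2"
    unfolding symq_def S by simp
  have P: "PP a2 a3 a4 (pt 0 0 1 b) r = a4*(r*(r+1)*(r+b)) + ((1+b)*(a2*(1+b)^2 + a3*b) + ((a2+a3)*(1+b)^2)*r + (a3*(1+b))*r^2)" for r
    unfolding PP_def S by (simp add: c2s algebra_simps power2_eq_square power3_eq_cube)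
  have nz: "1 + b \<noteq> 0" using b c2_eq[OF t, of 1 b] by auto
  show ?thesis
  proof
    assume "sing_pt a1 a2 a3 a4 \<beta> (pt 0 0 1 b)"
    then have h: "symq id a1 a2 a3 a4 \<beta> (pt 0 0 1 b) = 0" "PP a2 a3 a4 (pt 0 0 1 b) 0 = 0"
      "PP a2 a3 a4 (pt 0 0 1 b) 1 = 0" "PP a2 a3 a4 (pt 0 0 1 b) b = 0"
      unfolding sing_iff[OF t] by auto
    have "(1+b)*(a2*(1+b)^2 + a3*b) = 0 \<and> (a2+a3)*(1+b)^2 = 0 \<and> a3*(1+b) = 0"
    proof (rule quad_zero[of 0 1 b])
      fix r assume "r \<in> {0,1,b}"
      then show "(1+b)*(a2*(1+b)^2 + a3*b) + ((a2+a3)*(1+b)^2)*r + (a3*(1+b))*r^2 = 0"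
        using h P[of r] t c2s by auto
    qed (use b in auto)
    then have "a3 = 0" "a2 = 0" using nz by auto
    then show "a2 = 0 \<and> a3 = 0 \<and> a1 * (1 + b)^4 + \<beta> * b^2 = 0" using h F by simp
  next
    assume h: "a2 = 0 \<and> a3 = 0 \<and> a1 * (1 + b)^4 + \<beta> * b^2 = 0"
    then show "sing_pt a1 a2 a3 a4 \<beta> (pt 0 0 1 b)"
      unfolding sing_iff[OF t] pt_simps F P by (simp add: t c2s)
  qed
qed

lemma L011z: fixes a1 a2 a3 a4 \<beta> z :: "'a::field" assumes t: "(2::'a) = 0" and z: "z \<noteq> 0" "z \<noteq> 1"
  shows "sing_pt a1 a2 a3 a4 \<beta> (pt 0 1 1 z) \<longleftrightarrow>
            a3 = z * a2 \<and> a4 = z^2 * a2 \<and> \<beta> = a1 * z^4 + a2 * z^2 * (1 + z)"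
proof -
  note c2s = c2_Bit0[OF t] c2_Bit1[OF t] c2_diff[OF t] c2_neg[OF t]
  have S: "esym4 1 (pt 0 1 1 z) = z" "esym4 2 (pt 0 1 1 z) = 1" "esym4 3 (pt 0 1 1 z) = z" "esym4 4 (pt 0 1 1 z) = 0"
    by (simp_all add: e1 e1' e2 e3 e4 c2s algebra_simps)
  have F: "symq id a1 a2 a3 a4 \<beta> (pt 0 1 1 z) = (a1 * z^4 + a2*z^2 + a3*z^2) + \<beta>"
    unfolding symq_def S by (simp add: power2_eq_square)
  have P0: "PP a2 a3 a4 (pt 0 1 1 z) 0 = z*(a2*z^2 + a4)"
    unfolding PP_def S by (simp add: c2s algebra_simps power2_eq_square power3_eq_cube)
  have P1: "PP a2 a3 a4 (pt 0 1 1 z) 1 = (z*(1+z))*(a3 + a2*z)"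
    unfolding PP_def S by (simp add: c2s algebra_simps power2_eq_square power3_eq_cube)
  have Pz: "PP a2 a3 a4 (pt 0 1 1 z) z = 0"
    unfolding PP_def S by (simp add: c2s algebra_simps power2_eq_square power3_eq_cube)
  have nz: "z*(1 + z) \<noteq> 0" using z c2_eq[OF t, of 1 z] by auto
  show ?thesis
  proof
    assume "sing_pt a1 a2 a3 a4 \<beta> (pt 0 1 1 z)"
    then have h: "symq id a1 a2 a3 a4 \<beta> (pt 0 1 1 z) = 0" "PP a2 a3 a4 (pt 0 1 1 z) 0 = 0"
      "PP a2 a3 a4 (pt 0 1 1 z) 1 = 0"
      unfolding sing_iff[OF t] by auto
    have h4: "a4 = z^2 * a2" using h P0 z c2_eq[OF t, of "a2*z^2" a4] by (simp add: mult.commute)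
    have h3: "a3 = z * a2" using h P1 nz c2_eq[OF t, of a3 "a2*z"] by (simp add: mult.commute power2_eq_square)
    have "\<beta> = a1 * z^4 + a2*z^2 + a3*z^2" using h F c2_eq[OF t] by metis
    then have "\<beta> = a1 * z^4 + a2 * z^2 * (1 + z)" using h3 by (simp add: algebra_simps power2_eq_square)
    with h3 h4 show "a3 = z * a2 \<and> a4 = z^2 * a2 \<and> \<beta> = a1 * z^4 + a2 * z^2 * (1 + z)" by simp
  next
    assume h: "a3 = z * a2 \<and> a4 = z^2 * a2 \<and> \<beta> = a1 * z^4 + a2 * z^2 * (1 + z)"
    then show "sing_pt a1 a2 a3 a4 \<beta> (pt 0 1 1 z)"
      unfolding sing_iff[OF t] pt_simps F P0 P1 Pz 
      by (simp add: c2s algebra_simps power2_eq_square)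
  qed
qed


lemma L11bc: fixes a1 a2 a3 a4 \<beta> b c :: "'a::field" assumes t: "(2::'a) = 0"
  and b: "b \<noteq> 0" "b \<noteq> 1" and c: "c \<noteq> 0" "c \<noteq> 1" and bc: "b \<noteq> c"
  shows "sing_pt a1 a2 a3 a4 \<beta> (pt 1 1 b c) \<longleftrightarrow>
            a3 = (b+c) * a2 \<and> a4 = (b+c)^2 * a2 \<and>
            \<beta> * (1 + b * c)^2 + a1 * (b+c)^4 + a2 * (b+c)^2 * (1 + (b+c)) = 0"
proof -
  note c2s = c2_Bit0[OF t] c2_Bit1[OF t] c2_diff[OF t] c2_neg[OF t]
  define z where "z = b + c"
  have S: "esym4 1 (pt 1 1 b c) = z" "esym4 2 (pt 1 1 b c) = 1 + b*c" "esym4 3 (pt 1 1 b c) = z" "esym4 4 (pt 1 1 b c) = b*c"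
    by (simp_all add: z_def e1 e1' e2 e3 e4 c2s algebra_simps)
  have F: "symq id a1 a2 a3 a4 \<beta> (pt 1 1 b c) = a1*z^4 + a2*z^2*(1+b*c) + a3*z*z + a4*(b*c) + \<beta>*(1+b*c)^2"
    unfolding symq_def S by simp
  have P: "PP a2 a3 a4 (pt 1 1 b c) r = a4*((r+1)*(r+b)*(r+c)) + ((a2*z^3 + a3*z*(b*c) + a4*z + a4*(b*c)) + ((a2+a3)*z^2 + a4*(1+z))*r + (a3*z+a4)*r^2)" for r
    unfolding PP_def S by (simp add: z_def c2s algebra_simps power2_eq_square power3_eq_cube)
  have nz: "z \<noteq> 0" using bc c2_eq[OF t, of b c] by (auto simp: z_def)
  have "sing_pt a1 a2 a3 a4 \<beta> (pt 1 1 b c) \<longleftrightarrow>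
            a3 = z * a2 \<and> a4 = z^2 * a2 \<and>
            \<beta> * (1 + b * c)^2 + a1 * z^4 + a2 * z^2 * (1 + z) = 0"
  proof
    assume "sing_pt a1 a2 a3 a4 \<beta> (pt 1 1 b c)"
    then have h: "symq id a1 a2 a3 a4 \<beta> (pt 1 1 b c) = 0" 
      "PP a2 a3 a4 (pt 1 1 b c) 1 = 0" "PP a2 a3 a4 (pt 1 1 b c) b = 0" "PP a2 a3 a4 (pt 1 1 b c) c = 0"
      unfolding sing_iff[OF t] by auto
    have Q: "(a2*z^3 + a3*z*(b*c) + a4*z + a4*(b*c)) = 0 \<and> ((a2+a3)*z^2 + a4*(1+z)) = 0 \<and> (a3*z+a4) = 0"
    proof (rule quad_zero[of 1 b c])
      fix r assume "r \<in> {1,b,c}"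
      then show "(a2*z^3 + a3*z*(b*c) + a4*z + a4*(b*c)) + ((a2+a3)*z^2 + a4*(1+z))*r + (a3*z+a4)*r^2 = 0"
        using h P[of r] by (auto simp: t c2s)
    qed (use b c bc in auto)
    then have h4: "a4 = a3 * z" using c2_eq[OF t, of "a3*z" a4] by simp
    have "(a2+a3)*z^2 + a4*(1+z) = z * (a2 * z + a3)" 
      unfolding h4 by (simp add: c2s t algebra_simps power2_eq_square)
    then have "a2 * z + a3 = 0" using Q nz by simp
    then have h3: "a3 = z * a2" using c2_eq[OF t, of "a2*z" a3] by (simp add: mult.commute)
    have h4': "a4 = z^2 * a2" using h3 h4 by (simp add: power2_eq_square algebra_simps)
    have "symq id a1 a2 a3 a4 \<beta> (pt 1 1 b c) = \<beta> * (1 + b * c)^2 + a1 * z^4 + a2 * z^2 * (1 + z)"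
      unfolding F unfolding h3 h4' by (simp add: c2s t algebra_simps power2_eq_square)
    with h h3 h4' show "a3 = z * a2 \<and> a4 = z^2 * a2 \<and> \<beta> * (1 + b * c)^2 + a1 * z^4 + a2 * z^2 * (1 + z) = 0"
      by simp
  next
    assume h: "a3 = z * a2 \<and> a4 = z^2 * a2 \<and> \<beta> * (1 + b * c)^2 + a1 * z^4 + a2 * z^2 * (1 + z) = 0"
    have F': "symq id a1 a2 a3 a4 \<beta> (pt 1 1 b c) = \<beta> * (1 + b * c)^2 + a1 * z^4 + a2 * z^2 * (1 + z)"
    proof -
      have h3: "a3 = z * a2" and h4: "a4 = z^2 * a2" using h by auto
      show ?thesis unfolding F unfolding h3 h4 using h by (simp add: c2s t algebra_simps power2_eq_square)
    qed
    have Q: "(a2*z^3 + a3*z*(b*c) + a4*z + a4*(b*c)) = 0" "((a2+a3)*z^2 + a4*(1+z)) = 0" "(a3*z+a4) = 0"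
      using h by (simp_all add: c2s t algebra_simps power2_eq_square power3_eq_cube)
    show "sing_pt a1 a2 a3 a4 \<beta> (pt 1 1 b c)"
      unfolding sing_iff[OF t] pt_simps F' P Q using h by (simp add: t c2s)
  qed
  then show ?thesis by (simp add: z_def)
qed


lemma famA: fixes a1 a2 a3 a4 \<beta> u :: "'a::field" assumes t: "(2::'a) = 0" and h: "a4 = 0" "\<beta> = 0"
  shows "sing_pt a1 a2 a3 a4 \<beta> (pt 1 1 u u)"
proof -
  note c2s = c2_Bit0[OF t] c2_Bit1[OF t] c2_diff[OF t] c2_neg[OF t]
  have S: "esym4 1 (pt 1 1 u u) = 0" "esym4 3 (pt 1 1 u u) = 0"
    by (simp_all add: e1 e1' e3 c2s t algebra_simps)
  show ?thesis unfolding sing_iff[OF t] symq_def PP_def S h by simp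
qed

lemma famB: fixes a1 a2 a3 a4 \<beta> u w :: "'a::field" assumes t: "(2::'a) = 0" and h: "a4 = 0" "a3 = 0"
  and w: "1 + w + w^2 = 0"
  shows "sing_pt a1 a2 a3 a4 \<beta> (pt (w + (w+1)*u) 1 u (w + 1 + w*u))"
proof -
  note c2s = c2_Bit0[OF t] c2_Bit1[OF t] c2_diff[OF t] c2_neg[OF t]
  have S1: "esym4 1 (pt (w + (w+1)*u) 1 u (w + 1 + w*u)) = 0"
    by (simp add: e1 e1' c2s t algebra_simps)
  have "esym4 2 (pt (w + (w+1)*u) 1 u (w + 1 + w*u)) = (1 + w + w^2) * (1 + u^2)"
    by (simp add: e2 c2s t algebra_simps power2_eq_square)
  then have S2: "esym4 2 (pt (w + (w+1)*u) 1 u (w + 1 + w*u)) = 0" using w by simp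
  show ?thesis unfolding sing_iff[OF t] symq_def PP_def S1 S2 h by simp
qed

lemma no_family:
  fixes f :: "'a::field \<Rightarrow> nat \<Rightarrow> 'a"
  assumes K: "alg_closed TYPE('a)" and normal: "normal_quartic a1 a2 a3 a4 \<beta>"
    and sing: "\<And>u. sing_pt a1 a2 a3 a4 \<beta> (f u)" and f1: "\<And>u. f u 1 = 1" and f2: "\<And>u. f u 2 = u"
  shows False
proof -
  obtain P where fin: "finite P" and H: "\<And>x. sing_pt a1 a2 a3 a4 \<beta> x \<Longrightarrow> (\<exists>p\<in>P. \<exists>t::'a. \<forall>i<4. x i = t * p i)"
    using normal unfolding normal_quartic_def by blast
  define g where "g u = (SOME p. p \<in> P \<and> (\<exists>t::'a. \<forall>i<4. f u i = t * p i))" for u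
  have g: "g u \<in> P \<and> (\<exists>t::'a. \<forall>i<4. f u i = t * g u i)" for u
  proof -
    have "\<exists>p. p \<in> P \<and> (\<exists>t::'a. \<forall>i<4. f u i = t * p i)" using H[OF sing[of u]] by blast
    then show ?thesis unfolding g_def by (rule someI_ex)
  qed
  have "inj g"
  proof (rule injI)
    fix u v assume e: "g u = g v"
    obtain tu where tu: "\<forall>i<4. f u i = tu * g u i" using g by blast
    obtain tv where tv: "\<forall>i<4. f v i = tv * g v i" using g by blast
    have a: "tu * g u 1 = 1" "tv * g u 1 = 1" using tu tv f1 e by (metis zero_less_numeral one_less_numeral_iff semiring_norm(76))+
    then have "tu = tv" by (metis mult.commute mult_cancel_left one_neq_zero mult_zero_left)
    moreover have "f u 2 = tu * g u 2" "f v 2 = tv * g v 2" using tu tv by simp_all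
    ultimately show "u = v" using f2 e by metis
  qed
  moreover have "range g \<subseteq> P" using g by auto
  ultimately have "finite (UNIV::'a set)" using fin finite_imageD finite_subset by metis
  then show False using alg_closed_infinite[OF K] by simp
qed

lemma all_equal:
  fixes x :: "nat \<Rightarrow> 'a::field" assumes t: "(2::'a) = 0"
    and s: "esym4 1 x = 0" "esym4 2 x = 0" "esym4 3 x = 0"
  shows "x 0 = x 1"
proof -
  note c2s = c2_Bit0[OF t] c2_Bit1[OF t] c2_diff[OF t] c2_neg[OF t]
  have i0: "x 0^4 - esym4 1 x * x 0^3 + esym4 2 x * x 0^2 - esym4 3 x * x 0 + esym4 4 x = 0"
    unfolding e1 e2 e3 e4 by algebra
  have i1: "x 1^4 - esym4 1 x * x 1^3 + esym4 2 x * x 1^2 - esym4 3 x * x 1 + esym4 4 x = 0"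
    unfolding e1 e2 e3 e4 by algebra
  have "x 0^4 = x 1^4" using i0 i1 s by (simp add: eq_neg_iff_add_eq_0[symmetric])
  moreover have "(x 0 + x 1)^4 = x 0^4 + x 1^4" by (simp add: c2s t algebra_simps power4_eq_xxxx)
  ultimately have "(x 0 + x 1)^4 = 0" using c2_eq[OF t] t by simp
  then have "x 0 + x 1 = 0" by simp
  then show ?thesis using c2_eq[OF t] by simp
qed


lemma distinct_claim:
  fixes a1 a2 a3 a4 \<beta> :: "'a::field" and x :: "nat \<Rightarrow> 'a"
  assumes t: "(2::'a) = 0" and K: "alg_closed TYPE('a)" and normal: "normal_quartic a1 a2 a3 a4 \<beta>"
    and sing: "sing_pt a1 a2 a3 a4 \<beta> x" and d: "\<forall>i<4. \<forall>j<4. i \<noteq> j \<longrightarrow> x i \<noteq> x j"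
  shows False
proof -
  note c2s = c2_Bit0[OF t] c2_Bit1[OF t] c2_diff[OF t] c2_neg[OF t]
  have h: "symq id a1 a2 a3 a4 \<beta> x = 0" "PP a2 a3 a4 x (x 0) = 0" "PP a2 a3 a4 x (x 1) = 0"
     "PP a2 a3 a4 x (x 2) = 0" "PP a2 a3 a4 x (x 3) = 0"
    using sing unfolding sing_iff[OF t] by auto
  have Pc: "PP a2 a3 a4 x r = (a2*esym4 1 x^3 + a3*esym4 3 x + a3*esym4 1 x*esym4 2 x + a4*esym4 3 x)
     + ((a2+a3)*esym4 1 x^2 + a4*esym4 2 x)*r + ((a3+a4)*esym4 1 x)*r^2 + a4*r^3" for r
    by (simp add: PP_def algebra_simps)
  have dl: "distinct [x 0, x 1, x 2, x 3]" using d unfolding all4 by auto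
  have C: "(a2*esym4 1 x^3 + a3*esym4 3 x + a3*esym4 1 x*esym4 2 x + a4*esym4 3 x) = 0 \<and>
     ((a2+a3)*esym4 1 x^2 + a4*esym4 2 x) = 0 \<and> ((a3+a4)*esym4 1 x) = 0 \<and> a4 = 0"
    by (rule cubic_zero[OF _ dl]) (use h Pc in auto)
  then have h4: "a4 = 0" by simp
  have x01: "x 0 \<noteq> x 1" using dl by simp
  show False
  proof (cases "\<beta> = 0")
    case True
    show False
      by (rule no_family[OF K normal, of "\<lambda>u. pt 1 1 u u"]) (use famA[OF t h4 True] in auto)
  next
    case False
    have fB: False if a3: "a3 = 0"
    proof -
      have "degree [:1,1,1::'a:] > 0" by simp
      then obtain w :: 'a where "poly [:1,1,1:] w = 0" using K unfolding alg_closed_def by blast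
      then have w: "1 + w + w^2 = 0" by (simp add: algebra_simps power2_eq_square)
      show False
        by (rule no_family[OF K normal, of "\<lambda>u. pt (w + (w+1)*u) 1 u (w + 1 + w*u)"])
           (use famB[OF t h4 a3 w] in auto)
    qed
    show False
    proof (cases "esym4 1 x = 0")
      case False
      then have "a3 = 0" using C h4 by simp
      then show False by (rule fB)
    next
      case s1: True
      have "\<beta> * esym4 2 x ^ 2 = 0" using h(1) unfolding symq_def s1 h4 by simp
      then have s2: "esym4 2 x = 0" using \<open>\<beta> \<noteq> 0\<close> by simp
      have "a3 * esym4 3 x = 0" using C unfolding s1 h4 by simp
      then have "a3 = 0 \<or> esym4 3 x = 0" by simp
      then show False
      proof
        assume "a3 = 0" then show False by (rule fB)
      next
        assume s3: "esym4 3 x = 0"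
        show False using all_equal[OF t s1 s2 s3] x01 by simp
      qed
    qed
  qed
qed

theorem proposition4p2:
  fixes a1 a2 a3 a4 \<beta> :: "'a::field"
  assumes K: "alg_closed TYPE('a)" and char2: "CHAR('a) = 2"
    and normal: "normal_quartic a1 a2 a3 a4 \<beta>"
  shows "(\<forall>x. sing_pt a1 a2 a3 a4 \<beta> x \<longrightarrow>
            \<not> (\<forall>i<4. \<forall>j<4. i \<noteq> j \<longrightarrow> x i \<noteq> x j))
    \<and> (sing_pt a1 a2 a3 a4 \<beta> (pt 0 0 1 1) \<longleftrightarrow> \<beta> = 0)
    \<and> (sing_pt a1 a2 a3 a4 \<beta> (pt 0 0 0 1) \<longleftrightarrow> a1 = 0 \<and> a2 = 0)
    \<and> (\<forall>b. b \<noteq> 1 \<longrightarrow> (sing_pt a1 a2 a3 a4 \<beta> (pt 1 1 1 b) \<longleftrightarrow>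
            a4 = a2 * (1 + b)^2 \<and> \<beta> = a1 * (1 + b)^2 + a2 + a3))
    \<and> (sing_pt a1 a2 a3 a4 \<beta> (pt 1 1 1 1) \<longleftrightarrow> a4 = 0)
    \<and> (\<forall>b. b \<noteq> 0 \<and> b \<noteq> 1 \<longrightarrow> (sing_pt a1 a2 a3 a4 \<beta> (pt 0 0 1 b) \<longleftrightarrow>
            a2 = 0 \<and> a3 = 0 \<and> a1 * (1 + b)^4 + \<beta> * b^2 = 0))
    \<and> (\<forall>z. z \<noteq> 0 \<and> z \<noteq> 1 \<longrightarrow> (sing_pt a1 a2 a3 a4 \<beta> (pt 0 1 1 z) \<longleftrightarrow>
            a3 = z * a2 \<and> a4 = z^2 * a2 \<and> \<beta> = a1 * z^4 + a2 * z^2 * (1 + z)))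
    \<and> (\<forall>b c. b \<notin> {0, 1} \<and> c \<notin> {0, 1} \<and> b \<noteq> c \<longrightarrow>
           (let z = b + c in
            sing_pt a1 a2 a3 a4 \<beta> (pt 1 1 b c) \<longleftrightarrow>
            a3 = z * a2 \<and> a4 = z^2 * a2 \<and>
            \<beta> * (1 + b * c)^2 + a1 * z^4 + a2 * z^2 * (1 + z) = 0))"
proof -
  have t: "(2::'a) = 0" using two_of_char[OF char2] .
  have c1: "\<forall>x. sing_pt a1 a2 a3 a4 \<beta> x \<longrightarrow> \<not> (\<forall>i<4. \<forall>j<4. i \<noteq> j \<longrightarrow> x i \<noteq> x j)"
    using distinct_claim[OF t K normal] by blast
  have c4: "\<forall>b. b \<noteq> 1 \<longrightarrow> (sing_pt a1 a2 a3 a4 \<beta> (pt 1 1 1 b) \<longleftrightarrow>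
            a4 = a2 * (1 + b)^2 \<and> \<beta> = a1 * (1 + b)^2 + a2 + a3)"
    using L111b[OF t] by blast
  have c6: "\<forall>b. b \<noteq> 0 \<and> b \<noteq> 1 \<longrightarrow> (sing_pt a1 a2 a3 a4 \<beta> (pt 0 0 1 b) \<longleftrightarrow>
            a2 = 0 \<and> a3 = 0 \<and> a1 * (1 + b)^4 + \<beta> * b^2 = 0)"
    using L001b[OF t] by blast
  have c7: "\<forall>z. z \<noteq> 0 \<and> z \<noteq> 1 \<longrightarrow> (sing_pt a1 a2 a3 a4 \<beta> (pt 0 1 1 z) \<longleftrightarrow>
            a3 = z * a2 \<and> a4 = z^2 * a2 \<and> \<beta> = a1 * z^4 + a2 * z^2 * (1 + z))"
    using L011z[OF t] by blast
  have c8: "\<forall>b c. b \<notin> {0, 1} \<and> c \<notin> {0, 1} \<and> b \<noteq> c \<longrightarrow>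
           (sing_pt a1 a2 a3 a4 \<beta> (pt 1 1 b c) \<longleftrightarrow>
            a3 = (b + c) * a2 \<and> a4 = (b + c)^2 * a2 \<and>
            \<beta> * (1 + b * c)^2 + a1 * (b + c)^4 + a2 * (b + c)^2 * (1 + (b + c)) = 0)"
  proof (intro allI impI)
    fix b c :: 'a assume "b \<notin> {0, 1} \<and> c \<notin> {0, 1} \<and> b \<noteq> c"
    then show "sing_pt a1 a2 a3 a4 \<beta> (pt 1 1 b c) \<longleftrightarrow>
            a3 = (b + c) * a2 \<and> a4 = (b + c)^2 * a2 \<and>
            \<beta> * (1 + b * c)^2 + a1 * (b + c)^4 + a2 * (b + c)^2 * (1 + (b + c)) = 0"
      by (intro L11bc[OF t]) auto
  qed
  show ?thesis unfolding Let_def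
    by (intro conjI c1 c4 c6 c7 c8 L0011[OF t] L0001[OF t] L1111[OF t])
qed

end
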